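(* Let $n$ be a positive integer and let $w_1 \le w_2 \le \dots \le w_m$ be a feasible partition of $n$. Then $w_1 = 1$.
   Context: For a positive integer $n$, call a multiset of positive integers $\{w_1,\dots,w_k\}$ with $w_1+\dots+w_k=n$ a weighing partition of $n$ if every integer $\ell$ with $1\le \ell\le n$ can be written as $\ell=\sum_{j=1}^k u_j w_j$ with each $u_j\in\{-1,0,1\}$; this models weighing $\ell$ kg of goods in one weighing on a two-pan balance, with weights allowed on both pans. Let $m=m(n)$ be the minimum number of parts of a weighing partition of $n$. A feasible partition of $n$ is a weighing partition of $n$ with exactly $m$ parts, written in nondecreasing order $w_1\le w_2\le\dots\le w_m$. *)

theory Defs
  imports Main "HOL-Library.Multiset"
begin

definition signed_representable :: "nat list \<Rightarrow> int \<Rightarrow> bool" where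
  "signed_representable ws l \<longleftrightarrow>
     (\<exists>u :: nat \<Rightarrow> int. (\<forall>j < length ws. u j \<in> {-1, 0, 1}) \<and>
        l = (\<Sum>j<length ws. u j * int (ws ! j)))"

definition weighing_partition :: "nat \<Rightarrow> nat multiset \<Rightarrow> bool" where
  "weighing_partition n W \<longleftrightarrow>
     (\<forall>w \<in># W. w > 0) \<and> sum_mset W = n \<and>
     (\<forall>l::nat. 1 \<le> l \<and> l \<le> n \<longrightarrow> signed_representable (sorted_list_of_multiset W) (int l))"

definition min_parts :: "nat \<Rightarrow> nat" where
  "min_parts n = (LEAST k. \<exists>W. weighing_partition n W \<and> size W = k)"

definition feasible_partition :: "nat \<Rightarrow> nat multiset \<Rightarrow> bool" where
  "feasible_partition n W \<longleftrightarrow> weighing_partition n W \<and> size W = min_parts n"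

end

theory Submission
  imports Defs
begin

lemma one_in:
  fixes n :: nat and ws :: "nat list"
  assumes n2: "n \<ge> 2" and pos: "\<forall>w\<in>set ws. w > 0" and sm: "sum_list ws = n"
    and rep: "signed_representable ws (int (n - 1))"
  shows "1 \<in> set ws"
proof (rule ccontr)
  assume no1: "1 \<notin> set ws"
  obtain u where u: "\<forall>j<length ws. u j \<in> {-1,0,1}"
    and eq: "int (n - 1) = (\<Sum>j<length ws. u j * int (ws ! j))"
    using rep unfolding signed_representable_def by blast
  have "int n = (\<Sum>j<length ws. int (ws ! j))"
    using sm by (simp add: sum_list_sum_nth atLeast0LessThan flip: of_nat_sum)
  hence one: "(\<Sum>j<length ws. (1 - u j) * int (ws ! j)) = 1"
    using eq n2 by (simp add: sum_subtractf left_diff_distrib)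
  define t where "t j = (1 - u j) * int (ws ! j)" for j
  have tnn: "\<forall>j<length ws. t j \<ge> 0" using u by (auto simp: t_def)
  have t02: "\<forall>j<length ws. t j = 0 \<or> t j \<ge> 2"
  proof (intro allI impI)
    fix j assume j: "j < length ws"
    hence "ws ! j \<in> set ws" by simp
    hence "ws ! j \<ge> 2" using pos no1 by (metis One_nat_def Suc_1 Suc_leI le_neq_implies_less not_less_eq_eq)
    thus "t j = 0 \<or> t j \<ge> 2" using u j unfolding t_def by auto
  qed
  show False
  proof (cases "\<exists>j<length ws. t j \<noteq> 0")
    case True
    then obtain j where j: "j < length ws" "t j \<ge> 2" using t02 by blast
    have "t j \<le> (\<Sum>j<length ws. t j)"
      by (rule member_le_sum) (use j tnn in auto)
    thus False using one j unfolding t_def by simp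
  next
    case False
    hence "(\<Sum>j<length ws. t j) = 0" by simp
    thus False using one unfolding t_def by simp
  qed
qed

theorem theorem1:
  fixes n :: nat and ws :: "nat list"
  assumes "n > 0"
    and "sorted ws"
    and "feasible_partition n (mset ws)"
  shows "ws ! 0 = 1"
proof -
  have wp: "weighing_partition n (mset ws)" using assms(3) feasible_partition_def by blast
  have sl: "sorted_list_of_multiset (mset ws) = ws"
    using assms(2) by (simp add: sorted_sort_id)
  have pos: "\<forall>w\<in>set ws. w > 0" and sm: "sum_list ws = n"
    and rep: "\<forall>l::nat. 1 \<le> l \<and> l \<le> n \<longrightarrow> signed_representable ws (int l)"
    using wp sl unfolding weighing_partition_def by (auto simp: sum_mset_sum_list)
  have "1 \<in> set ws"
  proof (cases "n \<ge> 2")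
    case True
    have "signed_representable ws (int (n - 1))" using rep[rule_format, of "n - 1"] True by (simp del: of_nat_diff)
    thus ?thesis using one_in[OF True pos sm] by blast
  next
    case False
    hence "n = 1" using assms(1) by simp
    hence "ws \<noteq> []" using sm by auto
    then obtain w where w: "w \<in> set ws" by (meson list.set_sel(1))
    have "w \<le> sum_list ws" using w by (simp add: member_le_sum_list)
    thus ?thesis using w pos \<open>n = 1\<close> sm by (metis le_neq_implies_less less_one not_less_zero)
  qed
  then obtain i where i: "i < length ws" "ws ! i = 1" by (meson in_set_conv_nth)
  have "ws ! 0 \<le> ws ! i" using assms(2) i(1) by (intro sorted_nth_mono) auto
  moreover have "ws ! 0 > 0" using pos i by (metis gr_zeroI length_greater_0_conv list.size(3) not_less_zero nth_mem)
  ultimately show ?thesis using i by simp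
qed

end
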